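(* Let $G$ be a finite abelian group and $A$ a finite dimensional $G$-graded algebra with a regular grading with bicharacter $\beta$ whose regular decomposition is minimal. Let $A=D_1\oplus\cdots\oplus D_k\oplus J(A)$ (vector space direct sum) where $D_1,\dots,D_k$ are graded subalgebras with $D_iD_j=0$ for $i\ne j$, each $D_i$ graded-isomorphic to $K^\alpha G$ for a 2-cocycle $\alpha$ inducing $\beta$. Then each $D_i$ is a (central) simple algebra, so this is an ordinary Wedderburn–Malcev decomposition of $A$, and $D_i\,J(A)\,D_j=0$ for all $1\le i\ne j\le k$.
   Context: All algebras are associative with unit over an algebraically closed field $K$ of characteristic $0$; $G$ is finite abelian, written additively. A $G$-graded algebra $A$ has a regular grading if (i) for every $n$ and every $(g_1,\dots,g_n)\in G^n$ there exist $a_i\in A_{g_i}$ with $a_1\cdots a_n\ne0$, and (ii) there is $\beta\colon G\times G\to K^*$ with $a_ga_h=\beta(g,h)a_ha_g$ for all homogeneous $a_g\in A_g,a_h\in A_h$ ($\beta$ = bicharacter of $A$). The regular decomposition is minimal if there do not exist $g\neq h$ in $G$ with $\beta(x,g)=\beta(x,h)$ for all $x\in G$. For a 2-cocycle $\alpha$, $K^\alpha G$ has basis $\{X_g\}$ with $X_gX_h=\alpha(g,h)X_{g+h}$ and grading $(K^\alpha G)_g=KX_g$; $\alpha$ induces $\beta$ if $\beta(g,h)=\alpha(g,h)\alpha(h,g)^{-1}$. $J(A)$ denotes the Jacobson radical. *)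

theory Defs
  imports Main "HOL-Computational_Algebra.Polynomial"
begin

definition alg_closed_field :: "'k::field itself \<Rightarrow> bool" where
  "alg_closed_field _ \<longleftrightarrow> (\<forall>p :: 'k poly. degree p > 0 \<longrightarrow> (\<exists>x. poly p x = 0))"

definition k_algebra :: "('k::field \<Rightarrow> 'a::ring_1 \<Rightarrow> 'a) \<Rightarrow> bool" where
  "k_algebra scale \<longleftrightarrow> vector_space scale \<and>
     (\<forall>c x y. scale c (x * y) = scale c x * y \<and> scale c (x * y) = x * scale c y)"

definition fin_dim_algebra :: "('k::field \<Rightarrow> 'a::ring_1 \<Rightarrow> 'a) \<Rightarrow> bool" where
  "fin_dim_algebra scale \<longleftrightarrow> k_algebra scale \<and>
     (\<exists>B. finite B \<and> module.span scale B = UNIV)"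

definition graded_algebra ::
  "('k::field \<Rightarrow> 'a::ring_1 \<Rightarrow> 'a) \<Rightarrow> ('g::{finite,ab_group_add} \<Rightarrow> 'a set) \<Rightarrow> bool" where
  "graded_algebra scale Agr \<longleftrightarrow>
     (\<forall>g. module.subspace scale (Agr g)) \<and>
     (\<forall>a. \<exists>!f. (\<forall>g. f g \<in> Agr g) \<and> a = (\<Sum>g\<in>UNIV. f g)) \<and>
     (\<forall>g h x y. x \<in> Agr g \<longrightarrow> y \<in> Agr h \<longrightarrow> x * y \<in> Agr (g + h))"

definition regular_grading ::
  "('k::field \<Rightarrow> 'a::ring_1 \<Rightarrow> 'a) \<Rightarrow> ('g::{finite,ab_group_add} \<Rightarrow> 'a set) \<Rightarrow> ('g \<Rightarrow> 'g \<Rightarrow> 'k) \<Rightarrow> bool" where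
  "regular_grading scale Agr \<beta> \<longleftrightarrow>
     (\<forall>gs :: 'g list. \<exists>as :: 'a list. length as = length gs \<and>
         (\<forall>i < length gs. as ! i \<in> Agr (gs ! i)) \<and> prod_list as \<noteq> 0) \<and>
     (\<forall>g h. \<beta> g h \<noteq> 0) \<and>
     (\<forall>g h a b. a \<in> Agr g \<longrightarrow> b \<in> Agr h \<longrightarrow> a * b = scale (\<beta> g h) (b * a))"

definition minimal_regular :: "('g \<Rightarrow> 'g \<Rightarrow> 'k) \<Rightarrow> bool" where
  "minimal_regular \<beta> \<longleftrightarrow> \<not> (\<exists>g h. g \<noteq> h \<and> (\<forall>x. \<beta> x g = \<beta> x h))"

definition two_cocycle :: "('g::ab_group_add \<Rightarrow> 'g \<Rightarrow> 'k::field) \<Rightarrow> bool" where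
  "two_cocycle \<alpha> \<longleftrightarrow> (\<forall>g h. \<alpha> g h \<noteq> 0) \<and>
     (\<forall>g h l. \<alpha> g h * \<alpha> (g + h) l = \<alpha> h l * \<alpha> g (h + l))"

definition induces :: "('g \<Rightarrow> 'g \<Rightarrow> 'k::field) \<Rightarrow> ('g \<Rightarrow> 'g \<Rightarrow> 'k) \<Rightarrow> bool" where
  "induces \<alpha> \<beta> \<longleftrightarrow> (\<forall>g h. \<beta> g h = \<alpha> g h / \<alpha> h g)"

text \<open>The twisted group algebra K^alpha G, realised on functions G \<Rightarrow> K:
  f corresponds to the sum of f g X_g.  Multiplication, scalar action and
  homogeneous components.\<close>
definition tw_mult :: "('g::{finite,ab_group_add} \<Rightarrow> 'g \<Rightarrow> 'k::field) \<Rightarrow> ('g \<Rightarrow> 'k) \<Rightarrow> ('g \<Rightarrow> 'k) \<Rightarrow> ('g \<Rightarrow> 'k)" where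
  "tw_mult \<alpha> f1 f2 = (\<lambda>z. \<Sum>g\<in>UNIV. \<Sum>h\<in>UNIV. if g + h = z then \<alpha> g h * f1 g * f2 h else 0)"

definition tw_scale :: "'k::field \<Rightarrow> ('g \<Rightarrow> 'k) \<Rightarrow> ('g \<Rightarrow> 'k)" where
  "tw_scale c f = (\<lambda>g. c * f g)"

definition tw_component :: "'g \<Rightarrow> ('g \<Rightarrow> 'k::field) set" where
  "tw_component g = {f. \<forall>h. h \<noteq> g \<longrightarrow> f h = 0}"

definition graded_iso_twisted ::
  "('k::field \<Rightarrow> 'a::ring_1 \<Rightarrow> 'a) \<Rightarrow> ('g::{finite,ab_group_add} \<Rightarrow> 'a set) \<Rightarrow> ('g \<Rightarrow> 'g \<Rightarrow> 'k) \<Rightarrow> 'a set \<Rightarrow> bool" where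
  "graded_iso_twisted scale Agr \<alpha> D \<longleftrightarrow>
     (\<exists>\<phi> :: ('g \<Rightarrow> 'k) \<Rightarrow> 'a.
        bij_betw \<phi> UNIV D \<and>
        (\<forall>f1 f2. \<phi> (\<lambda>g. f1 g + f2 g) = \<phi> f1 + \<phi> f2) \<and>
        (\<forall>c f. \<phi> (tw_scale c f) = scale c (\<phi> f)) \<and>
        (\<forall>f1 f2. \<phi> (tw_mult \<alpha> f1 f2) = \<phi> f1 * \<phi> f2) \<and>
        (\<forall>g. \<phi> ` tw_component g = D \<inter> Agr g))"

text \<open>Graded subalgebra (not required to contain the unit of A).\<close>
definition graded_subalgebra ::
  "('k::field \<Rightarrow> 'a::ring_1 \<Rightarrow> 'a) \<Rightarrow> ('g::{finite,ab_group_add} \<Rightarrow> 'a set) \<Rightarrow> 'a set \<Rightarrow> bool" where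
  "graded_subalgebra scale Agr D \<longleftrightarrow> module.subspace scale D \<and>
     (\<forall>x\<in>D. \<forall>y\<in>D. x * y \<in> D) \<and>
     (\<forall>d\<in>D. \<exists>f. (\<forall>g. f g \<in> D \<inter> Agr g) \<and> d = (\<Sum>g\<in>UNIV. f g))"

definition left_ideal :: "'a::ring_1 set \<Rightarrow> bool" where
  "left_ideal I \<longleftrightarrow> 0 \<in> I \<and> (\<forall>x\<in>I. \<forall>y\<in>I. x + y \<in> I) \<and> (\<forall>r. \<forall>x\<in>I. r * x \<in> I)"

definition maximal_left_ideal :: "'a::ring_1 set \<Rightarrow> bool" where
  "maximal_left_ideal I \<longleftrightarrow> left_ideal I \<and> I \<noteq> UNIV \<and>
     (\<forall>L. left_ideal L \<and> I \<subseteq> L \<and> L \<noteq> UNIV \<longrightarrow> L = I)"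

definition jacobson_radical :: "'a::ring_1 set" where
  "jacobson_radical = \<Inter> {I. maximal_left_ideal I}"

definition ideal_of_subalg :: "('k::field \<Rightarrow> 'a::ring_1 \<Rightarrow> 'a) \<Rightarrow> 'a set \<Rightarrow> 'a set \<Rightarrow> bool" where
  "ideal_of_subalg scale D I \<longleftrightarrow> I \<subseteq> D \<and> module.subspace scale I \<and>
     (\<forall>d\<in>D. \<forall>x\<in>I. d * x \<in> I \<and> x * d \<in> I)"

definition simple_subalg :: "('k::field \<Rightarrow> 'a::ring_1 \<Rightarrow> 'a) \<Rightarrow> 'a set \<Rightarrow> bool" where
  "simple_subalg scale D \<longleftrightarrow> (\<exists>x\<in>D. \<exists>y\<in>D. x * y \<noteq> 0) \<and>
     (\<forall>I. ideal_of_subalg scale D I \<longrightarrow> I = {0} \<or> I = D)"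

definition central_subalg :: "('k::field \<Rightarrow> 'a::ring_1 \<Rightarrow> 'a) \<Rightarrow> 'a set \<Rightarrow> bool" where
  "central_subalg scale D \<longleftrightarrow> (\<exists>e\<in>D. (\<forall>x\<in>D. e * x = x \<and> x * e = x) \<and>
     {z\<in>D. \<forall>x\<in>D. z * x = x * z} = range (\<lambda>c. scale c e))"

end

theory Submission
  imports Defs
begin

lemma tw_mult_cdelta_left:
  fixes \<alpha> :: "'g::{finite,ab_group_add} \<Rightarrow> 'g \<Rightarrow> 'k::field"
  shows "tw_mult \<alpha> (\<lambda>p. if p = x then c else 0) f q = c * \<alpha> x (q - x) * f (q - x)"
proof -
  have "tw_mult \<alpha> (\<lambda>p. if p = x then c else 0) f q =
     (\<Sum>g\<in>UNIV. \<Sum>h\<in>UNIV. if h = q - g then (if g = x then \<alpha> g h * c * f h else 0) else 0)"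
    unfolding tw_mult_def by (intro sum.cong refl) (auto simp: algebra_simps)
  also have "\<dots> = c * \<alpha> x (q - x) * f (q - x)"
    by (simp add: sum.delta mult.commute mult.left_commute)
  finally show ?thesis .
qed

lemma tw_mult_cdelta_right:
  fixes \<alpha> :: "'g::{finite,ab_group_add} \<Rightarrow> 'g \<Rightarrow> 'k::field"
  shows "tw_mult \<alpha> f (\<lambda>p. if p = x then c else 0) q = c * \<alpha> (q - x) x * f (q - x)"
proof -
  have "tw_mult \<alpha> f (\<lambda>p. if p = x then c else 0) q =
     (\<Sum>h\<in>UNIV. \<Sum>g\<in>UNIV. if g = q - h then (if h = x then \<alpha> g h * f g * c else 0) else 0)"
    unfolding tw_mult_def by (subst sum.swap) (intro sum.cong refl, auto simp: algebra_simps)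
  also have "\<dots> = c * \<alpha> (q - x) x * f (q - x)"
    by (simp add: sum.delta mult.commute mult.left_commute)
  finally show ?thesis .
qed

lemma cocycle_norm:
  assumes "two_cocycle \<alpha>"
  shows "\<alpha> 0 h = \<alpha> 0 0" "\<alpha> g 0 = \<alpha> 0 0"
proof -
  have nz: "\<And>g h. \<alpha> g h \<noteq> 0" and c: "\<And>g h l. \<alpha> g h * \<alpha> (g + h) l = \<alpha> h l * \<alpha> g (h + l)"
    using assms unfolding two_cocycle_def by auto
  from c[of 0 0 h] nz show "\<alpha> 0 h = \<alpha> 0 0" by simp
  from c[of g 0 0] nz show "\<alpha> g 0 = \<alpha> 0 0" by simp
qed

definition tw_unit :: "('g::{finite,ab_group_add} \<Rightarrow> 'g \<Rightarrow> 'k::field) \<Rightarrow> 'g \<Rightarrow> 'k" where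
  "tw_unit \<alpha> = (\<lambda>p. if p = 0 then inverse (\<alpha> 0 0) else 0)"

lemma tw_unit:
  assumes "two_cocycle \<alpha>"
  shows "tw_mult \<alpha> (tw_unit \<alpha>) f = f" "tw_mult \<alpha> f (tw_unit \<alpha>) = f"
proof -
  have nz: "\<alpha> 0 0 \<noteq> 0" using assms unfolding two_cocycle_def by auto
  show "tw_mult \<alpha> (tw_unit \<alpha>) f = f"
  proof
    fix q have "\<alpha> 0 q = \<alpha> 0 0" by (rule cocycle_norm(1)[OF assms])
    then show "tw_mult \<alpha> (tw_unit \<alpha>) f q = f q" unfolding tw_unit_def
      by (simp add: tw_mult_cdelta_left nz)
  qed
  show "tw_mult \<alpha> f (tw_unit \<alpha>) = f"
  proof
    fix q have "\<alpha> q 0 = \<alpha> 0 0" by (rule cocycle_norm(2)[OF assms])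
    then show "tw_mult \<alpha> f (tw_unit \<alpha>) q = f q" unfolding tw_unit_def
      by (simp add: tw_mult_cdelta_right nz)
  qed
qed

lemma beta_zero:
  assumes "two_cocycle \<alpha>" "induces \<alpha> \<beta>"
  shows "\<beta> x 0 = 1" "\<beta> 0 x = 1"
proof -
  have nz: "\<alpha> 0 0 \<noteq> 0" using assms unfolding two_cocycle_def by auto
  show "\<beta> x 0 = 1" "\<beta> 0 x = 1" using assms(2) nz unfolding induces_def
    using cocycle_norm(1)[OF assms(1), of x] cocycle_norm(2)[OF assms(1), of x] by simp_all
qed

lemma tw_center:
  assumes co: "two_cocycle \<alpha>" and ind: "induces \<alpha> \<beta>" and mn: "minimal_regular \<beta>"
    and z: "\<forall>f. tw_mult \<alpha> f z = tw_mult \<alpha> z f"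
  shows "z = tw_scale (z 0 * \<alpha> 0 0) (tw_unit \<alpha>)"
proof (rule ext)
  fix g
  have nz: "\<And>g h. \<alpha> g h \<noteq> 0" using co unfolding two_cocycle_def by auto
  show "z g = tw_scale (z 0 * \<alpha> 0 0) (tw_unit \<alpha>) g"
  proof (cases "g = 0")
    case True then show ?thesis using nz by (simp add: tw_scale_def tw_unit_def)
  next
    case False
    have "z g = 0"
    proof (rule ccontr)
      assume zg: "z g \<noteq> 0"
      have "\<forall>x. \<beta> x g = \<beta> x 0"
      proof
        fix x
        have "tw_mult \<alpha> (\<lambda>p. if p = x then 1 else 0) z (g + x) = tw_mult \<alpha> z (\<lambda>p. if p = x then 1 else 0) (g + x)"
          using z by metis
        hence "\<alpha> x g * z g = \<alpha> g x * z g"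
          by (simp add: tw_mult_cdelta_left tw_mult_cdelta_right)
        hence "\<alpha> x g = \<alpha> g x" using zg by simp
        thus "\<beta> x g = \<beta> x 0" using ind nz beta_zero[OF co ind] unfolding induces_def by simp
      qed
      with False mn show False unfolding minimal_regular_def by blast
    qed
    with False show ?thesis by (simp add: tw_scale_def tw_unit_def)
  qed
qed

lemma tw_min_support:
  fixes \<alpha> :: "'g::{finite,ab_group_add} \<Rightarrow> 'g \<Rightarrow> 'k::field"
  assumes co: "two_cocycle \<alpha>" and ind: "induces \<alpha> \<beta>" and mn: "minimal_regular \<beta>"
    and Sadd: "\<forall>f\<in>S. \<forall>h\<in>S. (\<lambda>x. f x + h x) \<in> S"
    and Ssc: "\<forall>c. \<forall>f\<in>S. tw_scale c f \<in> S"
    and Sl: "\<forall>f. \<forall>s\<in>S. tw_mult \<alpha> f s \<in> S"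
    and Sr: "\<forall>f. \<forall>s\<in>S. tw_mult \<alpha> s f \<in> S"
  shows "z \<in> S \<Longrightarrow> z \<noteq> (\<lambda>_. 0) \<Longrightarrow> \<exists>g c. c \<noteq> 0 \<and> (\<lambda>p. if p = g then c else 0) \<in> S"
proof (induction "card {p. z p \<noteq> 0}" arbitrary: z rule: less_induct)
  case less
  have nz: "\<And>g h. \<alpha> g h \<noteq> 0" using co unfolding two_cocycle_def by auto
  from less.prems(2) obtain g0 where g0: "z g0 \<noteq> 0" by auto
  show ?case
  proof (cases "\<exists>g1. g1 \<noteq> g0 \<and> z g1 \<noteq> 0")
    case False
    then have "z = (\<lambda>p. if p = g0 then z g0 else 0)" by (auto intro!: ext)
    with g0 less.prems(1) show ?thesis by metis
  next
    case True
    then obtain g1 where g1: "g1 \<noteq> g0" "z g1 \<noteq> 0" by auto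
    from mn g1(1) obtain x where bx: "\<beta> x g1 \<noteq> \<beta> x g0" unfolding minimal_regular_def by metis
    define w where "w = (\<lambda>p. tw_mult \<alpha> (\<lambda>p. if p = x then 1 else 0) z p +
         tw_scale (- \<beta> x g0) (tw_mult \<alpha> z (\<lambda>p. if p = x then 1 else 0)) p)"
    have wS: "w \<in> S" unfolding w_def using Sadd Ssc Sl Sr less.prems(1) by blast
    have wval: "w p = z (p - x) * \<alpha> (p - x) x * (\<beta> x (p - x) - \<beta> x g0)" for p
    proof -
      have "\<alpha> x (p - x) = \<beta> x (p - x) * \<alpha> (p - x) x"
        using ind nz unfolding induces_def by simp
      then show ?thesis unfolding w_def tw_scale_def
        by (simp add: tw_mult_cdelta_left tw_mult_cdelta_right algebra_simps)
    qed
    have supp: "{p. w p \<noteq> 0} = (\<lambda>q. q + x) ` {q. z q \<noteq> 0 \<and> \<beta> x q \<noteq> \<beta> x g0}"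
    proof (rule set_eqI, rule iffI)
      fix p assume "p \<in> {p. w p \<noteq> 0}"
      then have "p - x \<in> {q. z q \<noteq> 0 \<and> \<beta> x q \<noteq> \<beta> x g0}" by (auto simp: wval)
      then show "p \<in> (\<lambda>q. q + x) ` {q. z q \<noteq> 0 \<and> \<beta> x q \<noteq> \<beta> x g0}"
        by (metis (no_types, lifting) diff_add_cancel image_eqI)
    next
      fix p assume "p \<in> (\<lambda>q. q + x) ` {q. z q \<noteq> 0 \<and> \<beta> x q \<noteq> \<beta> x g0}"
      then show "p \<in> {p. w p \<noteq> 0}" using nz by (auto simp: wval)
    qed
    have "card {p. w p \<noteq> 0} = card {q. z q \<noteq> 0 \<and> \<beta> x q \<noteq> \<beta> x g0}"
      unfolding supp by (rule card_image) (auto simp: inj_on_def)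
    also have "\<dots> < card {p. z p \<noteq> 0}"
      by (rule psubset_card_mono) (use g0 in auto)
    finally have lt: "card {p. w p \<noteq> 0} < card {p. z p \<noteq> 0}" .
    have "w (g1 + x) \<noteq> 0" using g1 bx nz by (simp add: wval)
    then have "w \<noteq> (\<lambda>_. 0)" by auto
    from less.hyps[OF lt wS this] show ?thesis .
  qed
qed

lemma tw_simple:
  fixes \<alpha> :: "'g::{finite,ab_group_add} \<Rightarrow> 'g \<Rightarrow> 'k::field"
  assumes co: "two_cocycle \<alpha>" and ind: "induces \<alpha> \<beta>" and mn: "minimal_regular \<beta>"
    and S0: "(\<lambda>_. 0) \<in> S"
    and Sadd: "\<forall>f\<in>S. \<forall>h\<in>S. (\<lambda>x. f x + h x) \<in> S"
    and Ssc: "\<forall>c. \<forall>f\<in>S. tw_scale c f \<in> S"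
    and Sl: "\<forall>f. \<forall>s\<in>S. tw_mult \<alpha> f s \<in> S"
    and Sr: "\<forall>f. \<forall>s\<in>S. tw_mult \<alpha> s f \<in> S"
  shows "S = {\<lambda>_. 0} \<or> S = UNIV"
proof (cases "\<exists>z\<in>S. z \<noteq> (\<lambda>_. 0)")
  case False then show ?thesis using S0 by blast
next
  case True
  then obtain z where "z \<in> S" "z \<noteq> (\<lambda>_. 0)" by blast
  from tw_min_support[OF co ind mn Sadd Ssc Sl Sr this] obtain g c
    where c: "c \<noteq> 0" and gS: "(\<lambda>p. if p = g then c else 0) \<in> S" by blast
  have nz: "\<And>g h. \<alpha> g h \<noteq> 0" using co unfolding two_cocycle_def by auto
  define d where "d = c * \<alpha> (- g) g"
  have d: "d \<noteq> 0" using c nz unfolding d_def by simp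
  have "tw_mult \<alpha> (\<lambda>p. if p = - g then 1 else 0) (\<lambda>p. if p = g then c else 0) = (\<lambda>p. if p = 0 then d else 0)"
  proof
    fix q show "tw_mult \<alpha> (\<lambda>p. if p = - g then 1 else 0) (\<lambda>p. if p = g then c else 0) q = (if q = 0 then d else 0)"
      by (simp add: tw_mult_cdelta_left d_def diff_eq_eq)
  qed
  with Sl gS have "(\<lambda>p. if p = 0 then d else 0) \<in> S" by metis
  with Ssc have "tw_scale (inverse d * inverse (\<alpha> 0 0)) (\<lambda>p. if p = 0 then d else 0) \<in> S" by blast
  moreover have "tw_scale (inverse d * inverse (\<alpha> 0 0)) (\<lambda>p. if p = 0 then d else 0) = tw_unit \<alpha>"
    using d by (auto simp: tw_scale_def tw_unit_def)
  ultimately have eS: "tw_unit \<alpha> \<in> S" by simp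
  have "S = UNIV"
  proof (rule set_eqI, rule iffI)
    fix f show "f \<in> S" using Sl eS tw_unit(1)[OF co] tw_unit(2)[OF co] by metis
  qed simp
  then show ?thesis by simp
qed

lemma D_props:
  fixes scale :: "'k::field \<Rightarrow> 'a::ring_1 \<Rightarrow> 'a"
    and Agr :: "'g::{finite,ab_group_add} \<Rightarrow> 'a set"
  assumes ka: "k_algebra scale" and co: "two_cocycle \<alpha>" and ind: "induces \<alpha> \<beta>"
    and mn: "minimal_regular \<beta>" and iso: "graded_iso_twisted scale Agr \<alpha> D"
  shows "simple_subalg scale D \<and> central_subalg scale D \<and>
         (\<exists>e\<in>D \<inter> Agr 0. \<forall>x\<in>D. e * x = x \<and> x * e = x)"
proof -
  have vs: "vector_space scale" and sc: "\<And>c x y. scale c (x * y) = scale c x * y"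
    "\<And>c x y. scale c (x * y) = x * scale c y"
    using ka unfolding k_algebra_def by metis+
  have sc1: "\<And>x. scale 1 x = x" using vs unfolding vector_space_def by auto
  have md: "module scale" using vs unfolding vector_space_def module_def by simp
  from iso obtain \<phi> :: "('g \<Rightarrow> 'k) \<Rightarrow> 'a" where
    bij: "bij_betw \<phi> UNIV D" and padd: "\<And>f1 f2. \<phi> (\<lambda>g. f1 g + f2 g) = \<phi> f1 + \<phi> f2"
    and psc: "\<And>c f. \<phi> (tw_scale c f) = scale c (\<phi> f)"
    and pmul: "\<And>f1 f2. \<phi> (tw_mult \<alpha> f1 f2) = \<phi> f1 * \<phi> f2"
    and pcomp: "\<And>g. \<phi> ` tw_component g = D \<inter> Agr g"
    unfolding graded_iso_twisted_def by blast
  have inj: "inj \<phi>" and Dim: "D = range \<phi>" using bij unfolding bij_betw_def by auto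
  have p0: "\<phi> (\<lambda>_. 0) = 0"
  proof -
    have "\<phi> (\<lambda>g. (\<lambda>_. 0) g + (\<lambda>_. 0) g) = \<phi> (\<lambda>_. 0) + \<phi> (\<lambda>_. 0)" by (rule padd)
    then show ?thesis by simp
  qed
  have nz: "\<alpha> 0 0 \<noteq> 0" using co unfolding two_cocycle_def by auto
  define e where "e = \<phi> (tw_unit \<alpha>)"
  have eD: "e \<in> D" unfolding e_def Dim by simp
  have "tw_unit \<alpha> \<in> tw_component 0" unfolding tw_unit_def tw_component_def by simp
  then have eA: "e \<in> Agr 0" using pcomp[of 0] unfolding e_def by blast
  have eunit: "e * x = x \<and> x * e = x" if "x \<in> D" for x
  proof -
    from that Dim obtain f where "x = \<phi> f" by auto
    then show ?thesis unfolding e_def using pmul tw_unit[OF co] by metis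
  qed
  have "tw_unit \<alpha> \<noteq> (\<lambda>_. 0)"
  proof
    assume "tw_unit \<alpha> = (\<lambda>_. 0)"
    then have "tw_unit \<alpha> 0 = 0" by simp
    with nz show False unfolding tw_unit_def by simp
  qed
  then have e0: "e \<noteq> 0" unfolding e_def using inj p0 by (metis injD)
  have simple: "simple_subalg scale D"
    unfolding simple_subalg_def
  proof (intro conjI allI impI)
    show "\<exists>x\<in>D. \<exists>y\<in>D. x * y \<noteq> 0" using eD eunit[OF eD] e0 by metis
  next
    fix I assume I: "ideal_of_subalg scale D I"
    then have ID: "I \<subseteq> D" and Isub: "module.subspace scale I"
      and Im: "\<forall>d\<in>D. \<forall>x\<in>I. d * x \<in> I \<and> x * d \<in> I"
      unfolding ideal_of_subalg_def by auto
    have I0: "0 \<in> I" and Iadd: "\<forall>x\<in>I. \<forall>y\<in>I. x + y \<in> I" and Isc: "\<forall>c. \<forall>x\<in>I. scale c x \<in> I"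
      using Isub unfolding module.subspace_def[OF md] by auto
    define S where "S = {f. \<phi> f \<in> I}"
    have "S = {\<lambda>_. 0} \<or> S = UNIV"
    proof (rule tw_simple[OF co ind mn])
      show "(\<lambda>_. 0) \<in> S" unfolding S_def using p0 I0 by simp
      show "\<forall>f\<in>S. \<forall>h\<in>S. (\<lambda>x. f x + h x) \<in> S" unfolding S_def using padd Iadd by simp
      show "\<forall>c. \<forall>f\<in>S. tw_scale c f \<in> S" unfolding S_def using psc Isc by simp
      show "\<forall>f. \<forall>s\<in>S. tw_mult \<alpha> f s \<in> S" unfolding S_def using pmul Im Dim by simp
      show "\<forall>f. \<forall>s\<in>S. tw_mult \<alpha> s f \<in> S" unfolding S_def using pmul Im Dim by simp
    qed
    then show "I = {0} \<or> I = D"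
    proof
      assume S: "S = {\<lambda>_. 0}"
      have "I \<subseteq> {0}"
      proof
        fix y assume y: "y \<in> I"
        with ID Dim obtain f where f: "y = \<phi> f" by auto
        with y have "f \<in> S" unfolding S_def by simp
        with S f p0 show "y \<in> {0}" by simp
      qed
      with I0 show ?thesis by auto
    next
      assume "S = UNIV"
      then have "D \<subseteq> I" unfolding S_def Dim by auto
      with ID show ?thesis by auto
    qed
  qed
  have central: "central_subalg scale D"
    unfolding central_subalg_def
  proof (intro bexI[of _ e] conjI)
    show "\<forall>x\<in>D. e * x = x \<and> x * e = x" using eunit by blast
    show "e \<in> D" by (rule eD)
    show "{z \<in> D. \<forall>x\<in>D. z * x = x * z} = range (\<lambda>c. scale c e)"
    proof (rule set_eqI, rule iffI)
      fix z assume z: "z \<in> {z \<in> D. \<forall>x\<in>D. z * x = x * z}"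
      then obtain f where f: "z = \<phi> f" using Dim by auto
      have "\<forall>h. tw_mult \<alpha> h f = tw_mult \<alpha> f h"
      proof
        fix h
        have "\<phi> (tw_mult \<alpha> h f) = \<phi> (tw_mult \<alpha> f h)"
          using z f pmul Dim by auto
        then show "tw_mult \<alpha> h f = tw_mult \<alpha> f h" using inj by (metis injD)
      qed
      from tw_center[OF co ind mn this] have "f = tw_scale (f 0 * \<alpha> 0 0) (tw_unit \<alpha>)" .
      then have "z = scale (f 0 * \<alpha> 0 0) e" unfolding f e_def by (metis psc)
      then show "z \<in> range (\<lambda>c. scale c e)" by simp
    next
      fix z assume "z \<in> range (\<lambda>c. scale c e)"
      then obtain c where c: "z = scale c e" by auto
      have "z \<in> D" unfolding c e_def Dim by (metis psc rangeI)
      moreover have "\<forall>x\<in>D. z * x = x * z"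
      proof
        fix x assume "x \<in> D"
        then show "z * x = x * z" unfolding c using sc eunit by metis
      qed
      ultimately show "z \<in> {z \<in> D. \<forall>x\<in>D. z * x = x * z}" by simp
    qed
  qed
  show ?thesis using simple central eD eA eunit by blast
qed


theorem mainTheorem7:
  fixes scale :: "'k::field_char_0 \<Rightarrow> 'a::ring_1 \<Rightarrow> 'a"
    and Agr :: "'g::{finite,ab_group_add} \<Rightarrow> 'a set"
    and \<beta> :: "'g \<Rightarrow> 'g \<Rightarrow> 'k"
    and k :: nat
    and D :: "nat \<Rightarrow> 'a set"
    and \<alpha> :: "nat \<Rightarrow> 'g \<Rightarrow> 'g \<Rightarrow> 'k"
  assumes "alg_closed_field TYPE('k)"
    and "fin_dim_algebra scale"
    and "graded_algebra scale Agr"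
    and "regular_grading scale Agr \<beta>"
    and "minimal_regular \<beta>"
    and "\<forall>i<k. graded_subalgebra scale Agr (D i)"
    and "\<forall>i<k. \<forall>j<k. i \<noteq> j \<longrightarrow> (\<forall>x\<in>D i. \<forall>y\<in>D j. x * y = 0)"
    and "\<forall>i<k. two_cocycle (\<alpha> i) \<and> induces (\<alpha> i) \<beta> \<and> graded_iso_twisted scale Agr (\<alpha> i) (D i)"
    and "\<forall>a. \<exists>!(d, j). (\<forall>i<k. d i \<in> D i) \<and> (\<forall>i\<ge>k. d i = 0) \<and> j \<in> jacobson_radical \<and>
            a = (\<Sum>i<k. d i) + j"
  shows "(\<forall>i<k. simple_subalg scale (D i) \<and> central_subalg scale (D i)) \<and>
         (\<forall>i<k. \<forall>j<k. i \<noteq> j \<longrightarrow>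
            (\<forall>x\<in>D i. \<forall>y\<in>jacobson_radical. \<forall>z\<in>D j. x * y * z = 0))"
proof -
  have ka: "k_algebra scale" using assms(2) unfolding fin_dim_algebra_def by simp
  have sc1: "\<And>x. scale 1 x = x" using ka unfolding k_algebra_def vector_space_def by auto
  have comm: "\<And>g h a b. a \<in> Agr g \<Longrightarrow> b \<in> Agr h \<Longrightarrow> a * b = scale (\<beta> g h) (b * a)"
    using assms(4) unfolding regular_grading_def by blast
  have dec: "\<And>a. \<exists>f. (\<forall>g. f g \<in> Agr g) \<and> a = (\<Sum>g\<in>UNIV. f g)"
    using assms(3) unfolding graded_algebra_def by metis
  have DP: "simple_subalg scale (D i) \<and> central_subalg scale (D i) \<and>
         (\<exists>e\<in>D i \<inter> Agr 0. \<forall>x\<in>D i. e * x = x \<and> x * e = x)" if "i < k" for i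
    using D_props[OF ka _ _ assms(5), of "\<alpha> i"] assms(8) that by blast
  have cent: "e * y = y * e" if i: "i < k" and e: "e \<in> Agr 0" for e y i
  proof -
    have b: "\<beta> 0 h = 1" for h using beta_zero(2) assms(8) i by blast
    obtain f where f: "\<forall>g. f g \<in> Agr g" "y = (\<Sum>g\<in>UNIV. f g)" using dec by blast
    have "e * y = (\<Sum>g\<in>UNIV. e * f g)" unfolding f(2) by (simp add: sum_distrib_left)
    also have "\<dots> = (\<Sum>g\<in>UNIV. f g * e)"
      by (intro sum.cong refl) (use comm[OF e f(1)[rule_format]] b sc1 in metis)
    also have "\<dots> = y * e" unfolding f(2) by (simp add: sum_distrib_right)
    finally show ?thesis .
  qed
  show ?thesis
  proof (intro conjI allI impI ballI)
    fix i assume "i < k"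
    then show "simple_subalg scale (D i)" "central_subalg scale (D i)" using DP by auto
  next
    fix i j x y z assume ij: "i < k" "j < k" "i \<noteq> j" and x: "x \<in> D i" and z: "z \<in> D j"
    obtain ei where ei: "ei \<in> D i" "ei \<in> Agr 0" "\<forall>x\<in>D i. ei * x = x \<and> x * ei = x"
      using DP[OF ij(1)] by blast
    obtain ej where ej: "ej \<in> D j" "\<forall>x\<in>D j. ej * x = x \<and> x * ej = x"
      using DP[OF ij(2)] by blast
    have eij: "ei * ej = 0" using assms(7) ij ei(1) ej(1) by blast
    have "x * y * z = (x * ei) * y * (ej * z)" using ei(3) ej(2) x z by simp
    also have "\<dots> = x * (ei * y) * ej * z" by (simp add: mult.assoc)
    also have "\<dots> = x * y * (ei * ej) * z" using cent[OF ij(1) ei(2)] by (simp add: mult.assoc)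
    also have "\<dots> = 0" using eij by simp
    finally show "x * y * z = 0" .
  qed
qed

end
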